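(* Let $d\geq 1$. Every $d$-degenerate graph $G$ with $n$ vertices and $m\geq\binom{d}{2}$ edges satisfies $$c(G)\;\leq\; n+\frac{(2^d-1)m}{d}-\frac{(d-3)2^d+d+1}{2}.$$
   Context: All graphs are finite, simple and undirected. A graph $G$ is $d$-degenerate if every subgraph of $G$ has a vertex of degree at most $d$. A clique of a graph $G$ is a (possibly empty) set of pairwise adjacent vertices; $c(G)$ denotes the number of cliques of $G$ (including the empty clique, all single vertices and all edges). *)

theory Defs
  imports Complex_Main
begin

definition simple_graph :: "'a set \<Rightarrow> 'a set set \<Rightarrow> bool" where
  "simple_graph V E \<longleftrightarrow> finite V \<and> (\<forall>e\<in>E. e \<subseteq> V \<and> card e = 2)"

definition subgraph :: "'a set \<Rightarrow> 'a set set \<Rightarrow> 'a set \<Rightarrow> 'a set set \<Rightarrow> bool" where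
  "subgraph V' E' V E \<longleftrightarrow> V' \<subseteq> V \<and> E' \<subseteq> E \<and> (\<forall>e\<in>E'. e \<subseteq> V')"

definition degree :: "'a set set \<Rightarrow> 'a \<Rightarrow> nat" where
  "degree E v = card {e\<in>E. v \<in> e}"

definition degenerate :: "nat \<Rightarrow> 'a set \<Rightarrow> 'a set set \<Rightarrow> bool" where
  "degenerate d V E \<longleftrightarrow>
     (\<forall>V' E'. subgraph V' E' V E \<and> V' \<noteq> {} \<longrightarrow> (\<exists>v\<in>V'. degree E' v \<le> d))"

definition clique :: "'a set set \<Rightarrow> 'a set \<Rightarrow> bool" where
  "clique E K \<longleftrightarrow> (\<forall>u\<in>K. \<forall>v\<in>K. u \<noteq> v \<longrightarrow> {u, v} \<in> E)"

text \<open>Number of cliques, including the empty clique.\<close>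
definition num_cliques :: "'a set \<Rightarrow> 'a set set \<Rightarrow> nat" where
  "num_cliques V E = card {K. K \<subseteq> V \<and> clique E K}"

end

theory Submission imports Defs begin

definition Bf :: "nat \<Rightarrow> nat \<Rightarrow> real \<Rightarrow> real" where
  "Bf j n m = real n + (2 ^ j - 1) * m / real j - ((real j - 3) * 2 ^ j + real j + 1) / 2"

lemma R_mono: "(2 ^ (i+1) - 1) / real (i+1) \<le> (2 ^ (Suc i + 1) - 1) / real (Suc i + 1 :: nat)"
proof -
  define x :: real where "x = 2 ^ (i+1)"
  have x1: "x \<ge> 1" unfolding x_def using one_le_power[of "2::real" "i+1"] by simp
  have e: "(2::real) ^ (Suc i + 1) = 2 * x" unfolding x_def by simp
  have "(x - 1) * (real i + 2) \<le> (2 * x - 1) * (real i + 1)"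
  proof -
    have "0 \<le> x * real i + 1" using x1 by simp
    then show ?thesis by (simp add: algebra_simps)
  qed
  then show ?thesis unfolding e x_def[symmetric]
    by (simp add: divide_simps add.commute)
qed

lemma conv: assumes "k \<le> j" "1 \<le> j"
  shows "(2::real) ^ k - 1 \<le> (2 ^ j - 1) * real k / real j"
proof (cases "k = 0")
  case True then show ?thesis by simp
next
  case False
  then obtain k' where k': "k = k' + 1" by (metis Suc_eq_plus1 not0_implies_Suc)
  define j' where "j' = j - 1"
  have j': "j = j' + 1" using assms unfolding j'_def by simp
  have "k' \<le> j'" using assms k' j' by simp
  have "(\<lambda>i. (2 ^ (i+1) - 1) / real (i+1::nat) :: real) k' \<le> (\<lambda>i. (2 ^ (i+1) - 1) / real (i+1)) j'"
    by (rule lift_Suc_mono_le[OF _ \<open>k' \<le> j'\<close>]) (rule R_mono)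
  then have "(2 ^ k - 1) / real k \<le> (2 ^ j - 1) / real j" using k' j' by simp
  then show ?thesis using False assms
    by (simp add: divide_simps mult.commute split: if_splits)
qed

lemma chain_step: assumes "1 \<le> i" "real (i+1) * real i \<le> 2 * m"
  shows "Bf i n m \<le> Bf (i+1) n m"
proof -
  have "Bf (i+1) n m - Bf i n m = ((real i - 1) * 2 ^ i + 1) * (m - real (i+1) * real i / 2) / (real (i+1) * real i)"
  proof -
    have "real i > 0" using assms(1) by simp
    then show ?thesis by (simp add: Bf_def divide_simps power_Suc) (simp add: algebra_simps)
  qed
  moreover have "0 \<le> ((real i - 1) * 2 ^ i + 1) * (m - real (i+1) * real i / 2) / (real (i+1) * real i)"
    using assms by (intro divide_nonneg_pos mult_nonneg_nonneg) auto
  ultimately show ?thesis by linarith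
qed

lemma chain: assumes "1 \<le> i" "i \<le> l" "real l * (real l - 1) \<le> 2 * m"
  shows "Bf i n m \<le> Bf l n m"
  using assms(2,3)
proof (induction l rule: dec_induct)
  case base then show ?case by simp
next
  case (step l)
  have "real l * (real l - 1) \<le> real (Suc l) * (real (Suc l) - 1)" by (simp add: algebra_simps)
  then have "Bf i n m \<le> Bf l n m" using step by linarith
  also have "\<dots> \<le> Bf (l+1) n m" using step assms(1) by (intro chain_step) (auto simp: algebra_simps)
  finally show ?case by simp
qed

lemma bstep: assumes "k \<le> j" "1 \<le> j"
  shows "Bf j n (m - real k) + 2 ^ k \<le> Bf j (Suc n) m"
proof -
  have "Bf j (Suc n) m - Bf j n (m - real k) = 1 + (2 ^ j - 1) * real k / real j"
    using assms by (simp add: Bf_def field_simps)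
  then show ?thesis using conv[OF assms] by linarith
qed


lemma finite_edges: "simple_graph V E \<Longrightarrow> finite E"
  unfolding simple_graph_def by (meson Pow_iff finite_Pow_iff finite_subset subsetI)

lemma handshake_le: assumes "simple_graph V E" "S \<subseteq> V"
  shows "(\<Sum>u\<in>S. degree E u) \<le> 2 * card E"
proof -
  have fV: "finite V" and fE: "finite E" using assms(1) finite_edges by (auto simp: simple_graph_def)
  have fS: "finite S" using fV assms(2) finite_subset by blast
  have "(\<Sum>u\<in>S. degree E u) = (\<Sum>u\<in>S. \<Sum>e\<in>E. if u \<in> e then 1 else 0)"
    unfolding degree_def using fE by (auto simp: sum.If_cases intro!: sum.cong arg_cong[where f=card])
  also have "\<dots> = (\<Sum>e\<in>E. \<Sum>u\<in>S. if u \<in> e then 1 else 0)" by (rule sum.swap)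
  also have "\<dots> = (\<Sum>e\<in>E. card (S \<inter> e))"
    using fS by (simp add: sum.If_cases Int_commute)
  also have "\<dots> \<le> (\<Sum>e\<in>E. card e)"
  proof (rule sum_mono)
    fix e assume "e \<in> E"
    then have "finite e" using assms(1) unfolding simple_graph_def
      by (metis card.infinite zero_neq_numeral)
    then show "card (S \<inter> e) \<le> card e" by (simp add: card_mono)
  qed
  also have "\<dots> = (\<Sum>e\<in>E. 2)" using assms(1) unfolding simple_graph_def by simp
  finally show ?thesis by simp
qed

lemma main:
  assumes "d \<ge> 1" "simple_graph V E" "degenerate d V E"
  shows "\<exists>j. 1 \<le> j \<and> j \<le> d \<and> real (num_cliques V E) \<le> Bf j (card V) (real (card E))"
  using assms
proof (induction "card V" arbitrary: V E)
  case 0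
  then have V: "V = {}" by (simp add: simple_graph_def)
  then have "E = {}" using 0 unfolding simple_graph_def by force
  moreover have "{K. K \<subseteq> V \<and> clique E K} = {{}}" using V by (auto simp: clique_def)
  ultimately have "num_cliques V E = 1" by (simp add: num_cliques_def)
  then show ?case using 0 V \<open>E = {}\<close> by (intro exI[of _ 1]) (simp add: Bf_def)
next
  case (Suc n V E)
  have fV: "finite V" using Suc.prems by (simp add: simple_graph_def)
  have fE: "finite E" using Suc.prems finite_edges by blast
  have Vne: "V \<noteq> {}" using Suc.hyps(2) by auto
  define k where "k = Min (degree E ` V)"
  have "k \<in> degree E ` V" unfolding k_def using Min_in fV Vne by simp
  then obtain v where vV: "v \<in> V" and vk: "degree E v = k" by auto
  have kmin: "\<And>u. u \<in> V \<Longrightarrow> k \<le> degree E u" unfolding k_def using fV by simp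
  have "subgraph V E V E" using Suc.prems unfolding subgraph_def simple_graph_def by auto
  then obtain u where "u \<in> V" "degree E u \<le> d" using Suc.prems Vne unfolding degenerate_def by blast
  then have kd: "k \<le> d" using kmin by fastforce
  define E' where "E' = {e\<in>E. v \<notin> e}"
  define Ev where "Ev = {e\<in>E. v \<in> e}"
  have cardEv: "card Ev = k" using vk unfolding Ev_def degree_def by simp
  have "E' = E - Ev" unfolding E'_def Ev_def by auto
  then have cardE': "card E' = card E - k" using fE cardEv by (simp add: card_Diff_subset Ev_def)
  have "card Ev \<le> card E" by (rule card_mono[OF fE]) (auto simp: Ev_def)
  then have kE: "k \<le> card E" using cardEv by simp
  have sg': "simple_graph (V - {v}) E'" using Suc.prems unfolding simple_graph_def E'_def by auto
  have dg': "degenerate d (V - {v}) E'"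
    unfolding degenerate_def
  proof (intro allI impI)
    fix V'' E'' assume a: "subgraph V'' E'' (V - {v}) E' \<and> V'' \<noteq> {}"
    then have "subgraph V'' E'' V E" by (auto simp: subgraph_def E'_def)
    then show "\<exists>v\<in>V''. degree E'' v \<le> d" using a Suc.prems(3) unfolding degenerate_def by blast
  qed
  have cV': "n = card (V - {v})" using Suc.hyps(2) vV fV by simp
  obtain j where j: "1 \<le> j" "j \<le> d" and IH: "real (num_cliques (V - {v}) E') \<le> Bf j n (real (card E'))"
    using Suc.hyps(1)[OF cV' Suc.prems(1) sg' dg'] cV' by blast
  define N where "N = {u. {v, u} \<in> E}"
  have NV: "N \<subseteq> V - {v}"
  proof
    fix u assume "u \<in> N"
    then have "{v,u} \<in> E" unfolding N_def by simp
    then have "{v,u} \<subseteq> V" "card {v,u} = 2" using Suc.prems(2) unfolding simple_graph_def by auto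
    then show "u \<in> V - {v}" by (cases "u = v") auto
  qed
  have fN: "finite N" using NV fV finite_subset by blast
  have bij: "bij_betw (\<lambda>u. {v,u}) N Ev"
  proof (rule bij_betw_imageI)
    show "inj_on (\<lambda>u. {v,u}) N" by (auto simp: inj_on_def doubleton_eq_iff)
    show "(\<lambda>u. {v,u}) ` N = Ev"
    proof
      show "(\<lambda>u. {v,u}) ` N \<subseteq> Ev" unfolding N_def Ev_def by auto
      show "Ev \<subseteq> (\<lambda>u. {v,u}) ` N"
      proof
        fix e assume "e \<in> Ev"
        then have "e \<in> E" "v \<in> e" unfolding Ev_def by auto
        then have "card e = 2" using Suc.prems(2) unfolding simple_graph_def by auto
        then obtain x y where "e = {x,y}" "x \<noteq> y" by (meson card_2_iff)
        with \<open>v \<in> e\<close> have "e = {v, if x = v then y else x}" by auto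
        then show "e \<in> (\<lambda>u. {v,u}) ` N" unfolding N_def using \<open>e \<in> E\<close> by auto
      qed
    qed
  qed
  have cardN: "card N = k" using bij_betw_same_card[OF bij] cardEv by simp
  define S where "S = {K. K \<subseteq> V \<and> clique E K}"
  have fS: "finite S" unfolding S_def using fV by simp
  have S_split: "S = {K\<in>S. v \<in> K} \<union> {K\<in>S. v \<notin> K}" by auto
  have cS: "card S = card {K\<in>S. v \<in> K} + card {K\<in>S. v \<notin> K}"
    using fS by (subst S_split) (rule card_Un_disjoint, auto)
  have S2: "{K\<in>S. v \<notin> K} = {K. K \<subseteq> V - {v} \<and> clique E' K}"
    unfolding S_def E'_def clique_def by auto
  have S1: "card {K\<in>S. v \<in> K} \<le> card (Pow N)"
  proof (rule card_inj_on_le)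
    show "inj_on (\<lambda>K. K - {v}) {K\<in>S. v \<in> K}" unfolding inj_on_def by blast
    show "(\<lambda>K. K - {v}) ` {K\<in>S. v \<in> K} \<subseteq> Pow N"
      unfolding S_def N_def clique_def by auto
    show "finite (Pow N)" using fN by simp
  qed
  have "card (Pow N) = 2 ^ k" using fN cardN by (simp add: card_Pow)
  then have cle: "num_cliques V E \<le> num_cliques (V - {v}) E' + 2 ^ k"
    using cS S1 S2 unfolding num_cliques_def S_def[symmetric] by simp
  have cV: "card V = Suc n" using Suc.hyps(2) by simp
  have rE': "real (card E') = real (card E) - real k" using cardE' kE by simp
  have cler: "real (num_cliques V E) \<le> real (num_cliques (V - {v}) E') + 2 ^ k"
    using cle by (metis of_nat_add of_nat_le_iff of_nat_power of_nat_numeral)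
  show ?case
  proof (cases "k \<le> j")
    case True
    have "real (num_cliques V E) \<le> Bf j n (real (card E) - real k) + 2 ^ k"
      using cler IH rE' by simp 
    also have "\<dots> \<le> Bf j (card V) (real (card E))" using bstep[OF True j(1)] cV by simp
    finally show ?thesis using j by blast
  next
    case False
    have "(\<Sum>u\<in>insert v N. degree E u) \<le> 2 * card E"
      using NV vV by (intro handshake_le[OF Suc.prems(2)]) auto
    moreover have "(\<Sum>u\<in>insert v N. k) \<le> (\<Sum>u\<in>insert v N. degree E u)"
      using kmin NV vV by (intro sum_mono) auto
    moreover have "v \<notin> N" using NV by auto
    ultimately have "(k + 1) * k \<le> 2 * card E" using fN cardN by simp
    then have hk: "real (k+1) * real k \<le> 2 * real (card E)" by (metis of_nat_mult of_nat_le_iff of_nat_numeral)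
    have hk2: "real k * (real k - 1) \<le> 2 * (real (card E) - real k)" using hk by (simp add: algebra_simps)
    have "real (num_cliques V E) \<le> Bf j n (real (card E) - real k) + 2 ^ k"
      using cler IH rE' by simp
    also have "\<dots> \<le> Bf k n (real (card E) - real k) + 2 ^ k"
      using chain[OF j(1) _ hk2] False by simp
    also have "\<dots> \<le> Bf k (card V) (real (card E))" using bstep[of k k] j False cV by simp
    finally show ?thesis using j False kd by (intro exI[of _ k]) auto
  qed
qed

theorem theorem4:
  fixes V :: "'a set" and E :: "'a set set" and d :: nat
  assumes "d \<ge> 1"
    and "simple_graph V E"
    and "degenerate d V E"
    and "card E \<ge> d choose 2"
  shows "real (num_cliques V E) \<le>
           real (card V) + (2 ^ d - 1) * real (card E) / real d
           - ((real d - 3) * 2 ^ d + real d + 1) / 2"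
proof -
  obtain j where j: "1 \<le> j" "j \<le> d" and c: "real (num_cliques V E) \<le> Bf j (card V) (real (card E))"
    using main[OF assms(1-3)] by blast
  have ev: "even (d * (d - 1))" by (cases d) auto
  have "2 * (d choose 2) = d * (d - 1)" unfolding choose_two using dvd_mult_div_cancel[OF ev] by simp
  then have "d * (d - 1) \<le> 2 * card E" using assms(4) by linarith
  then have "real d * (real d - 1) \<le> 2 * real (card E)"
    using assms(1) by (metis of_nat_1 of_nat_diff of_nat_le_iff of_nat_mult of_nat_numeral)
  then have "Bf j (card V) (real (card E)) \<le> Bf d (card V) (real (card E))" using chain j by blast
  then show ?thesis using c unfolding Bf_def by simp
qed

end
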